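(* For integers $n,k,r\ge1$ define \[ Q_{n,k,r}=\sum_{(m_\ell)}\ \prod_{\ell\ge1}\Bigl(\frac{a_\ell}{\ell!}\Bigr)^{m_\ell}\frac{1}{m_\ell!}, \] the sum over all sequences $(m_\ell)_{\ell\ge1}$ of non-negative integers with $\sum_\ell \ell m_\ell=n$, $\sum_\ell m_\ell=k$ and $m_\ell=0$ for all $\ell>r$, and let $F_r(s)=\sum_{\ell=1}^r \frac{a_\ell s^\ell}{\ell!}$. Then: (i) for all $n,k,r\ge1$, \[ Q_{n,k,r}\le\frac1{k!}\inf_{s>0}\frac{F_r(s)^k}{s^n}; \] (ii) for each $\eta>0$ there exist $n_0<\infty$ and positive numbers $(c_r)_{r\ge1}$ such that \[ Q_{n,k,r}\ge\frac{c_r}{\sqrt n}\,\frac1{k!}\inf_{s>0}\frac{F_r(s)^k}{s^n} \] for all $n\ge n_0$, all $k\ge1$ and all $r\ge2$ satisfying $k<(1-\eta)n$ and $rk>n(1+\eta)$.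
   Context: $a_\ell$ denotes the number of labeled trees on $\ell$ vertices (so $a_\ell=\ell^{\ell-2}$). *)

theory Defs
  imports Complex_Main
begin

text \<open>Number of labelled trees on l vertices: a_l = l^(l-2) (with a_1 = 1).\<close>
definition trees :: "nat \<Rightarrow> real" where
  "trees l = real l ^ (l - 2)"

definition seqs :: "nat \<Rightarrow> nat \<Rightarrow> nat \<Rightarrow> (nat \<Rightarrow> nat) set" where
  "seqs n k r = {m. (\<forall>l. m l \<noteq> 0 \<longrightarrow> 1 \<le> l \<and> l \<le> r)
                   \<and> (\<Sum>l=1..r. l * m l) = n \<and> (\<Sum>l=1..r. m l) = k}"

definition Q :: "nat \<Rightarrow> nat \<Rightarrow> nat \<Rightarrow> real" where
  "Q n k r = (\<Sum>m\<in>seqs n k r. \<Prod>l=1..r. (trees l / fact l) ^ m l / fact (m l))"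

definition F :: "nat \<Rightarrow> real \<Rightarrow> real" where
  "F r s = (\<Sum>l=1..r. trees l * s ^ l / fact l)"

definition bound :: "nat \<Rightarrow> nat \<Rightarrow> nat \<Rightarrow> real" where
  "bound n k r = (1 / fact k) * (INF s\<in>{0<..}. F r s ^ k / s ^ n)"

end

theory Submission
  imports Defs
begin

definition Dset :: "nat \<Rightarrow> nat \<Rightarrow> (nat \<Rightarrow> nat) set" where
  "Dset k r = {m. (\<forall>l. m l \<noteq> 0 \<longrightarrow> 1 \<le> l \<and> l \<le> r) \<and> (\<Sum>l=1..r. m l) = k}"

definition Pm :: "(nat \<Rightarrow> real) \<Rightarrow> nat \<Rightarrow> nat \<Rightarrow> (nat \<Rightarrow> nat) \<Rightarrow> real" where
  "Pm q k r m = fact k * (\<Prod>l=1..r. q l ^ m l / fact (m l))"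

lemma Dset_finite: "finite (Dset k r)"
proof -
  have "Dset k r \<subseteq> {f. \<forall>x. (x \<in> {1..r} \<longrightarrow> f x \<in> {0..k}) \<and> (x \<notin> {1..r} \<longrightarrow> f x = 0)}"
  proof
    fix m assume m: "m \<in> Dset k r"
    { fix x assume x: "x \<in> {1..r}"
      have "m x \<le> (\<Sum>l=1..r. m l)" using x by (intro member_le_sum) auto
      hence "m x \<le> k" using m by (simp add: Dset_def) }
    moreover { fix x assume "x \<notin> {1..r}" hence "m x = 0" using m by (auto simp: Dset_def) }
    ultimately show "m \<in> {f. \<forall>x. (x \<in> {1..r} \<longrightarrow> f x \<in> {0..k}) \<and> (x \<notin> {1..r} \<longrightarrow> f x = 0)}" by auto
  qed
  thus ?thesis by (rule finite_subset) (intro finite_set_of_finite_funs; simp)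
qed

lemma seqs_Dset: "seqs n k r = {m \<in> Dset k r. (\<Sum>l=1..r. l * m l) = n}"
  by (auto simp: seqs_def Dset_def)

lemma sum_upd: fixes m :: "nat \<Rightarrow> nat" and l r :: nat shows "l \<in> {1..r} \<Longrightarrow> (\<Sum>i=1..r. (m(l := v)) i) = (\<Sum>i=1..r. m i) - m l + v"
  and "l \<in> {1..r} \<Longrightarrow> (\<Sum>i=1..r. m i) \<ge> m l"
proof -
  assume l: "l \<in> {1..r}"
  have A: "(\<Sum>i=1..r. g i) = g l + (\<Sum>i\<in>{1..r}-{l}. g i)" for g :: "nat \<Rightarrow> nat"
    using l by (simp add: sum.remove)
  show "(\<Sum>i=1..r. (m(l := v)) i) = (\<Sum>i=1..r. m i) - m l + v"
    using A[of "m(l:=v)"] A[of m] by simp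
  show "(\<Sum>i=1..r. m i) \<ge> m l" using A[of m] by simp
qed

lemma Dset_0: "Dset 0 r = {\<lambda>_. 0}"
proof
  show "Dset 0 r \<subseteq> {\<lambda>_. 0}"
  proof
    fix m assume m: "m \<in> Dset 0 r"
    have "m l = 0" for l
    proof (cases "l \<in> {1..r}")
      case True
      have "m l \<le> (\<Sum>i=1..r. m i)" using True by (intro member_le_sum) auto
      moreover have "(\<Sum>i=1..r. m i) = 0" using m unfolding Dset_def by blast
      ultimately show ?thesis by linarith
    next
      case False
      have "\<forall>l. m l \<noteq> 0 \<longrightarrow> 1 \<le> l \<and> l \<le> r" using m unfolding Dset_def by blast
      thus ?thesis using False by auto
    qed
    thus "m \<in> {\<lambda>_. 0}" by auto
  qed
qed (simp add: Dset_def)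

lemma Pm_0: "Pm q 0 r (\<lambda>_. 0) = 1" by (simp add: Pm_def)

lemma upd_bij:
  assumes l: "l \<in> {1..r}"
  shows "bij_betw (\<lambda>m. m(l := m l + 1)) (Dset k r) {m \<in> Dset (Suc k) r. m l \<ge> 1}"
proof (rule bij_betw_byWitness[where f' = "\<lambda>m. m(l := m l - 1)"])
  show "\<forall>a\<in>Dset k r. a(l := a l + 1, l := (a(l := a l + 1)) l - 1) = a" by auto
  show "\<forall>a\<in>{m \<in> Dset (Suc k) r. 1 \<le> m l}. a(l := a l - 1, l := (a(l := a l - 1)) l + 1) = a" by auto
  show "(\<lambda>m. m(l := m l + 1)) ` Dset k r \<subseteq> {m \<in> Dset (Suc k) r. 1 \<le> m l}"
    using l sum_upd[OF l] by (auto simp: Dset_def split: if_splits)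
  show "(\<lambda>m. m(l := m l - 1)) ` {m \<in> Dset (Suc k) r. 1 \<le> m l} \<subseteq> Dset k r"
    using l sum_upd[OF l] by (auto simp: Dset_def split: if_splits)
qed

lemma Pm_upd:
  assumes l: "l \<in> {1..r}"
  shows "Pm q (Suc k) r (m(l := m l + 1)) * real (m l + 1) = real (Suc k) * q l * Pm q k r m"
proof -
  have A: "(\<Prod>i=1..r. g i) = g l * (\<Prod>i\<in>{1..r}-{l}. g i)" for g :: "nat \<Rightarrow> real"
    using l by (simp add: prod.remove)
  have B: "(\<Prod>i\<in>{1..r}-{l}. q i ^ (m(l := m l + 1)) i / fact ((m(l := m l + 1)) i))
     = (\<Prod>i\<in>{1..r}-{l}. q i ^ m i / fact (m i))" by (rule prod.cong) auto
  show ?thesis unfolding Pm_def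
    apply (subst A, subst A[of "\<lambda>i. q i ^ m i / fact (m i)"])
    apply (simp only: B)
    apply (simp add: fact_Suc del: of_nat_Suc)
    done
qed

lemma moment_shift:
  assumes l: "l \<in> {1..r}"
  shows "(\<Sum>m\<in>Dset (Suc k) r. Pm q (Suc k) r m * real (m l) * h m)
       = real (Suc k) * q l * (\<Sum>m\<in>Dset k r. Pm q k r m * h (m(l := m l + 1)))"
proof -
  have "(\<Sum>m\<in>Dset (Suc k) r. Pm q (Suc k) r m * real (m l) * h m)
      = (\<Sum>m\<in>{m \<in> Dset (Suc k) r. m l \<ge> 1}. Pm q (Suc k) r m * real (m l) * h m)"
    by (rule sum.mono_neutral_right) (auto simp: Dset_finite)
  also have "\<dots> = (\<Sum>m\<in>Dset k r. Pm q (Suc k) r (m(l := m l + 1)) * real (m l + 1) * h (m(l := m l + 1)))"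
    using sum.reindex_bij_betw[OF upd_bij[OF l], of "\<lambda>m. Pm q (Suc k) r m * real (m l) * h m", symmetric]
    by simp
  also have "\<dots> = (\<Sum>m\<in>Dset k r. real (Suc k) * q l * (Pm q k r m * h (m(l := m l + 1))))"
    by (rule sum.cong) (simp_all only: Pm_upd[OF l] mult.assoc)
  finally show ?thesis by (simp add: sum_distrib_left)
qed

locale normq =
  fixes q :: "nat \<Rightarrow> real" and r :: nat
  assumes sumq: "(\<Sum>l=1..r. q l) = 1"
begin

lemma mass: "(\<Sum>m\<in>Dset k r. Pm q k r m) = 1"
proof (induction k)
  case 0 then show ?case by (simp add: Dset_0 Pm_0)
next
  case (Suc k)
  have "real (Suc k) * (\<Sum>m\<in>Dset (Suc k) r. Pm q (Suc k) r m)
      = (\<Sum>m\<in>Dset (Suc k) r. Pm q (Suc k) r m * real (\<Sum>l=1..r. m l))"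
    by (simp add: sum_distrib_left sum_distrib_right Dset_def mult.commute)
  also have "\<dots> = (\<Sum>l=1..r. \<Sum>m\<in>Dset (Suc k) r. Pm q (Suc k) r m * real (m l) * 1)"
    by (simp add: sum_distrib_left) (rule sum.swap)
  also have "\<dots> = (\<Sum>l=1..r. real (Suc k) * q l * 1)"
    by (rule sum.cong) (simp_all add: moment_shift[where h="\<lambda>_. 1", simplified] Suc)
  also have "\<dots> = real (Suc k)" using sumq by (simp add: sum_distrib_left[symmetric])
  finally show ?case by simp
qed

lemma E1: assumes j: "j \<in> {1..r}"
  shows "(\<Sum>m\<in>Dset k r. Pm q k r m * real (m j)) = real k * q j"
proof (cases k)
  case 0 then show ?thesis by (simp add: Dset_0)
next
  case (Suc k')
  show ?thesis using moment_shift[OF j, where k=k' and q=q and h="\<lambda>_. 1"] by (simp add: Suc mass)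
qed

lemma E2: assumes l: "l \<in> {1..r}" and j: "j \<in> {1..r}"
  shows "(\<Sum>m\<in>Dset k r. Pm q k r m * real (m l) * real (m j))
     = real k * (real k - 1) * q l * q j + (if l = j then real k * q l else 0)"
proof (cases k)
  case 0 then show ?thesis by (simp add: Dset_0)
next
  case (Suc k')
  have "(\<Sum>m\<in>Dset k r. Pm q k r m * real (m l) * real (m j))
     = real (Suc k') * q l * (\<Sum>m\<in>Dset k' r. Pm q k' r m * real ((m(l := m l + 1)) j))"
    using moment_shift[OF l, where k=k' and q=q and h="\<lambda>m. real (m j)"] by (simp add: Suc)
  also have "(\<Sum>m\<in>Dset k' r. Pm q k' r m * real ((m(l := m l + 1)) j))
     = (\<Sum>m\<in>Dset k' r. Pm q k' r m * real (m j) + (if l = j then Pm q k' r m else 0))"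
    by (rule sum.cong) (auto simp: algebra_simps)
  also have "\<dots> = real k' * q j + (if l = j then 1 else 0)"
    by (simp add: sum.distrib E1[OF j] mass)
  finally show ?thesis by (simp add: Suc algebra_simps)
qed

lemma var:
  fixes c :: "nat \<Rightarrow> real"
  defines "\<mu> \<equiv> (\<Sum>l=1..r. c l * q l)"
  shows "(\<Sum>m\<in>Dset k r. Pm q k r m * ((\<Sum>l=1..r. c l * real (m l)) - real k * \<mu>)^2)
      = real k * ((\<Sum>l=1..r. c l ^ 2 * q l) - \<mu>^2)"
proof -
  define L where "L m = (\<Sum>l=1..r. c l * real (m l))" for m :: "nat \<Rightarrow> nat"
  have S1: "(\<Sum>m\<in>Dset k r. Pm q k r m * L m) = real k * \<mu>"
  proof -
    have "(\<Sum>m\<in>Dset k r. Pm q k r m * L m) = (\<Sum>l=1..r. c l * (\<Sum>m\<in>Dset k r. Pm q k r m * real (m l)))"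
      unfolding L_def by (simp add: sum_distrib_left algebra_simps) (rule sum.swap)
    also have "\<dots> = (\<Sum>l=1..r. c l * (real k * q l))" by (rule sum.cong) (simp_all add: E1)
    finally show ?thesis by (simp add: \<mu>_def sum_distrib_left algebra_simps)
  qed
  have S2: "(\<Sum>m\<in>Dset k r. Pm q k r m * (L m)^2) = real k * (real k - 1) * \<mu>^2 + real k * (\<Sum>l=1..r. c l ^ 2 * q l)"
  proof -
    have "(\<Sum>m\<in>Dset k r. Pm q k r m * (L m)^2)
       = (\<Sum>m\<in>Dset k r. \<Sum>l=1..r. \<Sum>j=1..r. c l * c j * (Pm q k r m * real (m l) * real (m j)))"
      unfolding L_def power2_eq_square sum_product
      by (simp add: sum_distrib_left algebra_simps)
    also have "\<dots> = (\<Sum>l=1..r. \<Sum>j=1..r. c l * c j * (\<Sum>m\<in>Dset k r. Pm q k r m * real (m l) * real (m j)))"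
      by (simp add: sum.swap[of _ "Dset k r"] sum_distrib_left)
    also have "\<dots> = (\<Sum>l=1..r. \<Sum>j=1..r. c l * c j * (real k * (real k - 1) * q l * q j + (if l = j then real k * q l else 0)))"
      by (intro sum.cong refl) (simp add: E2)
    also have "\<dots> = (\<Sum>l=1..r. real k * (real k - 1) * (c l * q l) * \<mu> + real k * (c l ^ 2 * q l))"
    proof (rule sum.cong[OF refl])
      fix l assume l: "l \<in> {1..r}"
      have "(\<Sum>j=1..r. c l * c j * (real k * (real k - 1) * q l * q j + (if l = j then real k * q l else 0)))
         = (\<Sum>j=1..r. real k * (real k - 1) * (c l * q l) * (c j * q j) + (if l = j then real k * (c l ^ 2 * q l) else 0))"
        by (rule sum.cong) (auto simp: algebra_simps power2_eq_square)
      also have "\<dots> = real k * (real k - 1) * (c l * q l) * \<mu> + real k * (c l ^ 2 * q l)"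
        using l by (simp add: sum.distrib \<mu>_def sum_distrib_left)
      finally show "(\<Sum>j=1..r. c l * c j * (real k * (real k - 1) * q l * q j + (if l = j then real k * q l else 0)))
         = real k * (real k - 1) * (c l * q l) * \<mu> + real k * (c l ^ 2 * q l)" .
    qed
    also have "\<dots> = real k * (real k - 1) * \<mu>^2 + real k * (\<Sum>l=1..r. c l ^ 2 * q l)"
      by (simp add: sum.distrib \<mu>_def power2_eq_square sum_distrib_left[symmetric] sum_distrib_right[symmetric])
    finally show ?thesis .
  qed
  have "(\<Sum>m\<in>Dset k r. Pm q k r m * (L m - real k * \<mu>)^2)
     = (\<Sum>m\<in>Dset k r. Pm q k r m * (L m)^2 - (2 * real k * \<mu>) * (Pm q k r m * L m) + (real k * \<mu>)^2 * Pm q k r m)"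
    by (rule sum.cong) (simp_all add: power2_diff algebra_simps)
  also have "\<dots> = (\<Sum>m\<in>Dset k r. Pm q k r m * (L m)^2) - (2 * real k * \<mu>) * (\<Sum>m\<in>Dset k r. Pm q k r m * L m)
       + (real k * \<mu>)^2 * (\<Sum>m\<in>Dset k r. Pm q k r m)"
    by (simp add: sum.distrib sum_subtractf sum_distrib_left)
  also have "\<dots> = real k * ((\<Sum>l=1..r. c l ^ 2 * q l) - \<mu>^2)"
    unfolding S1 S2 mass by (simp add: power2_eq_square algebra_simps)
  finally show ?thesis unfolding L_def .
qed

end

definition qs :: "nat \<Rightarrow> real \<Rightarrow> nat \<Rightarrow> real" where
  "qs r s l = trees l * s ^ l / fact l / F r s"

lemma trees_nonneg: "trees l \<ge> 0" by (simp add: trees_def)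
lemma trees_pos: "l \<ge> 1 \<Longrightarrow> trees l > 0" by (simp add: trees_def)

lemma F_pos: assumes "r \<ge> 1" "s > 0" shows "F r s > 0"
proof -
  have "F r s = trees 1 * s ^ 1 / fact 1 + (\<Sum>l\<in>{1..r}-{1}. trees l * s ^ l / fact l)"
    unfolding F_def using assms by (subst sum.remove[of _ 1]) auto
  moreover have "(\<Sum>l\<in>{1..r}-{1}. trees l * s ^ l / fact l) \<ge> 0"
    using assms by (intro sum_nonneg) (simp add: trees_nonneg)
  ultimately show ?thesis using assms by (simp add: trees_def)
qed

lemma qs_normq: assumes "r \<ge> 1" "s > 0" shows "normq (qs r s) r"
proof
  have "(\<Sum>l=1..r. qs r s l) = F r s / F r s" by (simp only: qs_def sum_divide_distrib[symmetric] F_def)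
  thus "(\<Sum>l=1..r. qs r s l) = 1" using F_pos[OF assms] by simp
qed

lemma qs_nonneg: assumes "r \<ge> 1" "s > 0" shows "qs r s l \<ge> 0"
  using F_pos[OF assms] assms by (simp add: qs_def trees_nonneg)

lemma Pm_seqs:
  assumes m: "m \<in> seqs n k r"
  shows "Pm (qs r s) k r m = fact k * s ^ n / F r s ^ k * (\<Prod>l=1..r. (trees l / fact l) ^ m l / fact (m l))"
proof -
  have n: "(\<Sum>l=1..r. l * m l) = n" and k: "(\<Sum>l=1..r. m l) = k" using m by (auto simp: seqs_def)
  have "(\<Prod>l=1..r. qs r s l ^ m l / fact (m l))
     = (\<Prod>l=1..r. ((trees l / fact l) ^ m l / fact (m l)) * s ^ (l * m l) / F r s ^ (m l))"
    by (rule prod.cong) (simp_all add: qs_def power_divide power_mult_distrib power_mult)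
  also have "\<dots> = (\<Prod>l=1..r. (trees l / fact l) ^ m l / fact (m l)) * (\<Prod>l=1..r. s ^ (l * m l)) / (\<Prod>l=1..r. F r s ^ (m l))"
    by (simp add: prod.distrib prod_dividef)
  also have "\<dots> = (\<Prod>l=1..r. (trees l / fact l) ^ m l / fact (m l)) * s ^ n / F r s ^ k"
    by (simp only: power_sum[symmetric] n k)
  finally show ?thesis by (simp add: Pm_def)
qed

lemma sum_seqs:
  "(\<Sum>m\<in>seqs n k r. Pm (qs r s) k r m) = fact k * s ^ n / F r s ^ k * Q n k r"
  unfolding Q_def by (simp add: Pm_seqs sum_distrib_left)

lemma seqs_sub: "seqs n k r \<subseteq> Dset k r" by (auto simp: seqs_Dset)

lemma Pm_nonneg: "(\<And>l. q l \<ge> 0) \<Longrightarrow> Pm q k r m \<ge> 0"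
  unfolding Pm_def by (intro mult_nonneg_nonneg prod_nonneg) auto

lemma Q_le_each:
  assumes "r \<ge> 1" "s > 0"
  shows "Q n k r \<le> F r s ^ k / s ^ n / fact k"
proof -
  interpret normq "qs r s" r by (rule qs_normq[OF assms])
  have "fact k * s ^ n / F r s ^ k * Q n k r \<le> 1"
    unfolding sum_seqs[symmetric] mass[of k, symmetric]
    by (rule sum_mono2[OF Dset_finite seqs_sub]) (intro Pm_nonneg qs_nonneg assms)
  moreover have "F r s ^ k > 0" "s ^ n > 0" using F_pos[OF assms] assms by auto
  ultimately show ?thesis by (simp add: field_simps)
qed

lemma part1:
  assumes "r \<ge> 1"
  shows "Q n k r \<le> bound n k r"
proof -
  have "Q n k r * fact k \<le> (INF s\<in>{0<..}. F r s ^ k / s ^ n)"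
    by (rule cINF_greatest) (use Q_le_each[OF assms] in \<open>auto simp: field_simps\<close>)
  thus ?thesis unfolding bound_def by (simp add: field_simps)
qed

lemma bound_le:
  assumes "r \<ge> 1" "s > 0"
  shows "bound n k r \<le> F r s ^ k / s ^ n / fact k"
proof -
  have "(INF s\<in>{0<..}. F r s ^ k / s ^ n) \<le> F r s ^ k / s ^ n"
  proof (rule cINF_lower)
    show "bdd_below ((\<lambda>s. F r s ^ k / s ^ n) ` {0<..})"
    proof (rule bdd_belowI[of _ 0])
      fix y assume "y \<in> (\<lambda>s. F r s ^ k / s ^ n) ` {0<..}"
      then obtain x where x: "x > 0" "y = F r x ^ k / x ^ n" by auto
      have "F r x > 0" by (rule F_pos[OF assms(1) x(1)])
      thus "0 \<le> y" using x by simp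
    qed
  qed (use assms in auto)
  thus ?thesis unfolding bound_def by (simp add: field_simps)
qed

lemma sum_split2:
  fixes g :: "nat \<Rightarrow> 'b::comm_monoid_add"
  assumes "a \<in> A" "b \<in> A" "a \<noteq> b" "finite A"
  shows "sum g A = g a + g b + sum g (A - {a} - {b})"
proof -
  have "sum g A = g a + sum g (A - {a})" using assms by (simp add: sum.remove)
  also have "sum g (A - {a}) = g b + sum g (A - {a} - {b})" using assms by (subst sum.remove[of _ b]) auto
  finally show ?thesis by (simp add: add.assoc)
qed

lemma prod_split2:
  fixes g :: "nat \<Rightarrow> 'b::comm_monoid_mult"
  assumes "a \<in> A" "b \<in> A" "a \<noteq> b" "finite A"
  shows "prod g A = g a * g b * prod g (A - {a} - {b})"
proof -
  have "prod g A = g a * prod g (A - {a})" using assms by (simp add: prod.remove)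
  also have "prod g (A - {a}) = g b * prod g (A - {a} - {b})" using assms by (subst prod.remove[of _ b]) auto
  finally show ?thesis by (simp add: mult.assoc)
qed

lemma fact_lower: "fact (u + t) \<ge> (fact u :: real) * (real u + 1) ^ t"
proof (induction t)
  case 0 then show ?case by simp
next
  case (Suc t)
  have "fact (u + Suc t) = (real (u + t) + 1) * (fact (u + t) :: real)" by (simp add: algebra_simps)
  also have "\<dots> \<ge> (real u + 1) * (fact u * (real u + 1) ^ t)"
    by (intro mult_mono Suc) auto
  finally show ?case by (simp add: algebra_simps)
qed

lemma fact_upper: "fact (y + t) \<le> (fact y :: real) * (real y + real t) ^ t"
proof (induction t)
  case 0 then show ?case by simp
next
  case (Suc t)
  have "fact (y + Suc t) = (real y + real t + 1) * (fact (y + t) :: real)" by (simp add: algebra_simps)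
  also have "\<dots> \<le> (real y + real t + 1) * (fact y * (real y + real t) ^ t)"
    by (intro mult_left_mono Suc) auto
  also have "\<dots> \<le> (real y + real t + 1) * (fact y * (real y + real t + 1) ^ t)"
    by (intro mult_left_mono power_mono) auto
  finally show ?case by (simp add: algebra_simps)
qed

lemma pow_lower:
  fixes e T :: real
  assumes "0 \<le> e" "e \<le> 1/2" "real t \<le> T"
  shows "(1 - e) ^ t \<ge> exp (- 2 * e * T)"
proof -
  have ee: "e * e \<le> e * (1/2)" by (rule mult_left_mono) (use assms in auto)
  have l: "ln (1 - e) \<ge> - 2 * e"
    using ln_one_minus_pos_lower_bound[OF assms(1,2)] ee by (simp add: power2_eq_square)
  have eq: "(1 - e) ^ t = exp (real t * ln (1 - e))"
    using assms by (simp add: exp_of_nat_mult)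
  have "real t * ln (1 - e) \<ge> real t * (- 2 * e)" by (intro mult_left_mono l) auto
  hence 1: "exp (real t * ln (1 - e)) \<ge> exp (real t * (- 2 * e))" by simp
  have "2 * e * real t \<le> 2 * e * T" by (rule mult_left_mono) (use assms in auto)
  hence 2: "exp (- 2 * e * T) \<le> exp (real t * (- 2 * e))" by (simp add: mult.commute)
  show ?thesis using 1 2 eq by linarith
qed

lemma ratio_core:
  fixes qa qb X Y \<delta> K A B kk \<epsilon> :: real
  assumes \<delta>: "\<delta> > 0" "qa \<ge> \<delta>" "qb \<ge> \<delta>"
    and K: "K > 0" "kk = K^2" and AB: "A \<ge> 0" "B \<ge> 0" "4*(A+B) \<le> \<delta>*K"
    and eps: "\<epsilon> = (A+B)/(\<delta>*K)"
    and X: "X \<ge> kk * qa - (A+B)*K" and Y: "Y \<le> kk * qb + (A+B)*K" "Y > 0"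
  shows "X > 0" "(qb * X) / (qa * Y) \<ge> 1 - 2*\<epsilon>" "0 \<le> 2*\<epsilon>" "2*\<epsilon> \<le> 1/2"
    "2 * (2*\<epsilon>) * (A*K) = 4*A*(A+B)/\<delta>"
proof -
  have e0: "\<epsilon> \<ge> 0" using eps \<delta> K AB by simp
  have ed: "\<epsilon> * (\<delta> * K) = A + B" using eps \<delta> K by simp
  have "(4*\<epsilon>) * (\<delta> * K) = 4 * (A+B)" using ed by (simp only: mult.assoc)
  hence "(4*\<epsilon>) * (\<delta> * K) \<le> 1 * (\<delta> * K)" using AB by linarith
  hence "4*\<epsilon> \<le> 1" using \<delta> K by (meson mult_right_le_imp_le mult_pos_pos)
  hence e1: "\<epsilon> \<le> 1/4" by simp
  show "0 \<le> 2*\<epsilon>" "2*\<epsilon> \<le> 1/2" using e0 e1 by auto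
  have ABK: "(A+B)*K = \<epsilon> * \<delta> * kk" using eps \<delta> K by (simp add: field_simps power2_eq_square)
  have kk0: "kk > 0" using K by simp
  have "\<delta>*kk \<le> qa*kk" using \<delta> kk0 by (simp add: mult_right_mono)
  hence "\<epsilon>*(\<delta>*kk) \<le> \<epsilon>*(qa*kk)" by (rule mult_left_mono) (use e0 in simp)
  hence a1: "(A+B)*K \<le> \<epsilon> * (kk * qa)" unfolding ABK by (simp add: algebra_simps)
  have "\<delta>*kk \<le> qb*kk" using \<delta> kk0 by (simp add: mult_right_mono)
  hence "\<epsilon>*(\<delta>*kk) \<le> \<epsilon>*(qb*kk)" by (rule mult_left_mono) (use e0 in simp)
  hence b1: "(A+B)*K \<le> \<epsilon> * (kk * qb)" unfolding ABK by (simp add: algebra_simps)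
  have Xl: "X \<ge> (kk * qa) * (1 - \<epsilon>)" using X a1 by (simp add: algebra_simps)
  have Yu: "Y \<le> (kk * qb) * (1 + \<epsilon>)" using Y b1 by (simp add: algebra_simps)
  have pa: "kk * qa > 0" "kk * qb > 0" using kk0 \<delta> by auto
  have "(kk*qa)*(1-\<epsilon>) > 0" by (rule mult_pos_pos) (use pa e1 in auto)
  hence X0: "X > 0" using Xl by linarith
  thus "X > 0" .
  have "(qb * ((kk * qa) * (1 - \<epsilon>))) / (qa * ((kk * qb) * (1 + \<epsilon>))) \<le> (qb * X) / (qa * Y)"
  proof (rule frac_le)
    show "0 \<le> qb * X" using X0 \<delta> by simp
    show "qb * ((kk * qa) * (1 - \<epsilon>)) \<le> qb * X" using Xl \<delta> by (simp add: mult_left_mono)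
    show "0 < qa * Y" using Y \<delta> by simp
    show "qa * Y \<le> qa * ((kk * qb) * (1 + \<epsilon>))" using Yu \<delta> by (simp add: mult_left_mono)
  qed
  moreover have "(qb * ((kk * qa) * (1 - \<epsilon>))) / (qa * ((kk * qb) * (1 + \<epsilon>))) = (1 - \<epsilon>) / (1 + \<epsilon>)"
  proof -
    have "qb * ((kk * qa) * (1 - \<epsilon>)) = (kk*qa*qb) * (1 - \<epsilon>)"
      "qa * ((kk * qb) * (1 + \<epsilon>)) = (kk*qa*qb) * (1 + \<epsilon>)" by (simp_all add: algebra_simps)
    moreover have "kk*qa*qb \<noteq> 0" using kk0 \<delta> by simp
    ultimately show ?thesis by simp
  qed
  moreover have "(1 - \<epsilon>) / (1 + \<epsilon>) \<ge> 1 - 2*\<epsilon>" using e0 by (simp add: field_simps)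
  ultimately show "(qb * X) / (qa * Y) \<ge> 1 - 2*\<epsilon>" by linarith
  have eK: "\<epsilon>*K = (A+B)/\<delta>" using ed \<delta> by (simp add: field_simps)
  have "2 * (2*\<epsilon>) * (A*K) = 4*A*(\<epsilon>*K)" by (simp add: algebra_simps)
  thus "2 * (2*\<epsilon>) * (A*K) = 4*A*(A+B)/\<delta>" using eK by simp
qed

lemma core_ineq:
  fixes qa qb X Y g :: real and u y t :: nat
  assumes qa: "qa > 0" and qb: "qb > 0" and X: "X = real u" "X > 0" and Y: "Y = real y + real t" "Y > 0"
    and rho: "(qb * X) / (qa * Y) \<ge> e" "e \<ge> 0" and g: "e ^ t \<ge> g" "g \<ge> 0"
  shows "qa ^ u / fact u * (qb ^ (y + t) / fact (y + t)) \<ge> g * (qa ^ (u + t) / fact (u + t) * (qb ^ y / fact y))"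
proof -
  define Z where "Z = qa ^ u * qb ^ y / (fact u * fact y)"
  have Z0: "Z \<ge> 0" using qa qb by (simp add: Z_def)
  have L1: "qa ^ u / fact u * (qb ^ (y + t) / fact (y + t)) \<ge> Z * (qb / Y) ^ t"
  proof -
    have f: "fact (y + t) \<le> (fact y :: real) * Y ^ t" using fact_upper[of y t] Y by simp
    have "Z * (qb / Y) ^ t = (qa ^ u * qb ^ (y + t) / fact u) / (fact y * Y ^ t)"
      using Y by (simp add: Z_def power_add power_divide field_simps)
    also have "\<dots> \<le> (qa ^ u * qb ^ (y + t) / fact u) / fact (y + t)"
      by (rule divide_left_mono[OF f]) (use qa qb Y in auto)
    also have "\<dots> = qa ^ u / fact u * (qb ^ (y + t) / fact (y + t))" by simp
    finally show ?thesis .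
  qed
  have L2: "qa ^ (u + t) / fact (u + t) * (qb ^ y / fact y) \<le> Z * (qa / X) ^ t"
  proof -
    have "fact (u + t) \<ge> (fact u :: real) * (real u + 1) ^ t" by (rule fact_lower)
    moreover have "(real u + 1) ^ t \<ge> X ^ t" using X by (intro power_mono) auto
    ultimately have f: "fact (u + t) \<ge> (fact u :: real) * X ^ t"
      by (meson fact_ge_zero mult_left_mono order_trans)
    have "qa ^ (u + t) / fact (u + t) * (qb ^ y / fact y) = (qa ^ (u + t) * qb ^ y / fact y) / fact (u + t)" by simp
    also have "\<dots> \<le> (qa ^ (u + t) * qb ^ y / fact y) / (fact u * X ^ t)"
      by (rule divide_left_mono[OF f]) (use qa qb X in auto)
    also have "\<dots> = Z * (qa / X) ^ t" using X by (simp add: Z_def power_add power_divide field_simps)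
    finally show ?thesis .
  qed
  have L3: "(qb / Y) ^ t \<ge> g * (qa / X) ^ t"
  proof -
    have "qb / Y = ((qb * X) / (qa * Y)) * (qa / X)" using qa X(2) Y(2) by (simp add: field_simps)
    hence "(qb / Y) ^ t = ((qb * X) / (qa * Y)) ^ t * (qa / X) ^ t" by (metis power_mult_distrib)
    moreover have "((qb * X) / (qa * Y)) ^ t \<ge> e ^ t" using rho by (intro power_mono) auto
    moreover have "(qa / X) ^ t \<ge> 0" using qa X(2) by simp
    ultimately show ?thesis using g by (metis mult_right_mono order_trans)
  qed
  have "g * (qa ^ (u + t) / fact (u + t) * (qb ^ y / fact y)) \<le> g * (Z * (qa / X) ^ t)"
    by (rule mult_left_mono[OF L2 g(2)])
  also have "\<dots> = Z * (g * (qa / X) ^ t)" by simp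
  also have "\<dots> \<le> Z * (qb / Y) ^ t" by (rule mult_left_mono[OF L3 Z0])
  also have "\<dots> \<le> qa ^ u / fact u * (qb ^ (y + t) / fact (y + t))" by (rule L1)
  finally show ?thesis .
qed

lemma shift_Pm:
  fixes q :: "nat \<Rightarrow> real" and m :: "nat \<Rightarrow> nat"
  assumes ab: "a \<in> {1..r}" "b \<in> {1..r}" "a \<noteq> b"
  and qnn: "\<And>l. q l \<ge> 0" and \<delta>: "\<delta> > 0" "q a \<ge> \<delta>" "q b \<ge> \<delta>"
  and K: "K > 0" "real k = K^2" and AB: "A \<ge> 0" "B \<ge> 0" "4*(A+B) \<le> \<delta>*K"
  and ma: "\<bar>real (m a) - real k * q a\<bar> \<le> B*K" and mb: "\<bar>real (m b) - real k * q b\<bar> \<le> B*K"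
  and t: "real t \<le> A*K"
  shows "t \<le> m a \<and> Pm q k r (m(a := m a - t, b := m b + t)) \<ge> exp(-4*A*(A+B)/\<delta>) * Pm q k r m"
proof -
  define \<epsilon> where "\<epsilon> = (A+B)/(\<delta>*K)"
  define X where "X = real (m a) - real t"
  define Y where "Y = real (m b) + real t"
  have X: "X \<ge> real k * q a - (A+B)*K" using ma t unfolding X_def abs_le_iff by (simp add: algebra_simps)
  have Yu: "Y \<le> real k * q b + (A+B)*K" using mb t unfolding Y_def abs_le_iff by (simp add: algebra_simps)
  have "real k * q b \<ge> K^2 * \<delta>" using K \<delta> by (simp add: mult_left_mono)
  hence "real k * q b - B * K \<ge> K * (\<delta> * K - B)" by (simp add: algebra_simps power2_eq_square)
  moreover have "\<delta> * K > 0" using K \<delta> by simp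
  hence "\<delta> * K - B > 0" using AB by (smt (verit))
  hence "K * (\<delta> * K - B) > 0" using K by simp
  ultimately have Y0: "Y > 0" using mb unfolding Y_def abs_le_iff by linarith
  note rc = ratio_core[OF \<delta> K AB \<epsilon>_def X Yu Y0]
  have tm: "t \<le> m a" using rc(1) unfolding X_def by simp
  define u where "u = m a - t"
  have mau: "m a = u + t" using tm by (simp add: u_def)
  have Xu: "X = real u" using tm by (simp add: X_def u_def)
  define \<gamma> where "\<gamma> = exp(-4*A*(A+B)/\<delta>)"
  have g: "(1 - 2*\<epsilon>) ^ t \<ge> \<gamma>"
    using pow_lower[OF rc(3) rc(4) t] rc(5) by (simp add: \<gamma>_def)
  have core: "q a ^ u / fact u * (q b ^ (m b + t) / fact (m b + t)) \<ge> \<gamma> * (q a ^ (u + t) / fact (u + t) * (q b ^ m b / fact (m b)))"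
    by (rule core_ineq[OF _ _ Xu rc(1) Y_def Y0 rc(2) _ g]) (use \<delta> rc(4) in \<open>auto simp: \<gamma>_def\<close>)
  define R where "R = (\<Prod>l\<in>{1..r}-{a}-{b}. q l ^ m l / fact (m l))"
  have R0: "R \<ge> 0" unfolding R_def by (intro prod_nonneg) (simp add: qnn)
  have P1: "Pm q k r m = fact k * (q a ^ m a / fact (m a) * (q b ^ m b / fact (m b)) * R)"
    unfolding Pm_def R_def by (subst prod_split2[OF ab]) auto
  have P2: "Pm q k r (m(a := m a - t, b := m b + t)) = fact k * (q a ^ u / fact u * (q b ^ (m b + t) / fact (m b + t)) * R)"
  proof -
    have "(\<Prod>l\<in>{1..r}-{a}-{b}. q l ^ (m(a := m a - t, b := m b + t)) l / fact ((m(a := m a - t, b := m b + t)) l)) = R"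
      unfolding R_def by (rule prod.cong) auto
    thus ?thesis unfolding Pm_def using ab by (subst prod_split2[OF ab]) (auto simp: u_def)
  qed
  have "\<gamma> * Pm q k r m = fact k * ((\<gamma> * (q a ^ (u + t) / fact (u + t) * (q b ^ m b / fact (m b)))) * R)"
    unfolding P1 mau by (simp add: algebra_simps)
  also have "\<dots> \<le> fact k * (q a ^ u / fact u * (q b ^ (m b + t) / fact (m b + t)) * R)"
    by (intro mult_left_mono mult_right_mono core R0) auto
  finally show ?thesis using tm P2 by (simp add: \<gamma>_def)
qed

lemma shift_Dset:
  assumes ab: "a \<in> {1..r}" "b \<in> {1..r}" "a \<noteq> b" and m: "m \<in> Dset k r" and t: "t \<le> m a"
  shows "m(a := m a - t, b := m b + t) \<in> Dset k r"
    and "(\<Sum>l=1..r. l * (m(a := m a - t, b := m b + t)) l) + a * t = (\<Sum>l=1..r. l * m l) + b * t"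
proof -
  let ?m = "m(a := m a - t, b := m b + t)"
  have rest: "(\<Sum>l\<in>{1..r}-{a}-{b}. g (?m l)) = (\<Sum>l\<in>{1..r}-{a}-{b}. g (m l))" for g :: "nat \<Rightarrow> nat"
    by (rule sum.cong) auto
  have rest2: "(\<Sum>l\<in>{1..r}-{a}-{b}. l * ?m l) = (\<Sum>l\<in>{1..r}-{a}-{b}. l * m l)"
    by (rule sum.cong) auto
  have s1: "(\<Sum>l=1..r. ?m l) = (\<Sum>l=1..r. m l)"
    using sum_split2[OF ab, of ?m] sum_split2[OF ab, of m] rest[of id] ab t by auto
  show "?m \<in> Dset k r"
    using m s1 ab unfolding Dset_def by (auto split: if_splits)
  have "(\<Sum>l=1..r. l * ?m l) = a * (m a - t) + b * (m b + t) + (\<Sum>l\<in>{1..r}-{a}-{b}. l * m l)"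
    using sum_split2[OF ab, of "\<lambda>l. l * ?m l"] rest2 ab by simp
  moreover have "(\<Sum>l=1..r. l * m l) = a * m a + b * m b + (\<Sum>l\<in>{1..r}-{a}-{b}. l * m l)"
    using sum_split2[OF ab, of "\<lambda>l. l * m l"] by simp
  moreover have "a * (m a - t) + a * t = a * m a" using t
    by (metis add.commute add_mult_distrib2 le_add_diff_inverse)
  ultimately show "(\<Sum>l=1..r. l * ?m l) + a * t = (\<Sum>l=1..r. l * m l) + b * t"
    by (simp add: algebra_simps)
qed

lemma shift_inj:
  fixes a b t :: nat
  assumes "a \<noteq> b"
  shows "inj_on (\<lambda>m::nat\<Rightarrow>nat. m(a := m a - t, b := m b + t)) {m. t \<le> m a}"
proof (rule inj_onI)
  fix m m' assume m: "m \<in> {m. t \<le> m a}" and m': "m' \<in> {m. t \<le> m a}"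
    and eq: "m(a := m a - t, b := m b + t) = m'(a := m' a - t, b := m' b + t)"
  show "m = m'"
  proof
    fix l
    have "(m(a := m a - t, b := m b + t)) l = (m'(a := m' a - t, b := m' b + t)) l" using eq by simp
    moreover have "(m(a := m a - t, b := m b + t)) a = (m'(a := m' a - t, b := m' b + t)) a" using eq by simp
    hence "m a - t = m' a - t" using assms by simp
    hence "m a = m' a" using m m' by (simp add: eq_diff_iff)
    moreover have "(m(a := m a - t, b := m b + t)) b = (m'(a := m' a - t, b := m' b + t)) b" using eq by simp
    hence "m b = m' b" by simp
    ultimately show "m l = m' l" using assms by (cases "l = a"; cases "l = b") auto
  qed
qed

lemma step2:
  fixes q :: "nat \<Rightarrow> real"
  assumes ab: "a \<in> {1..r}" "b \<in> {1..r}" "a \<noteq> b"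
  and qnn: "\<And>l. q l \<ge> 0" and \<delta>: "\<delta> > 0" "q a \<ge> \<delta>" "q b \<ge> \<delta>"
  and K: "K > 0" "real k = K^2" and AB: "A \<ge> 0" "B \<ge> 0" "4*(A+B) \<le> \<delta>*K"
  and t: "real t \<le> A*K"
  and G: "G \<subseteq> {m \<in> Dset k r. \<bar>real (m a) - real k * q a\<bar> \<le> B*K \<and> \<bar>real (m b) - real k * q b\<bar> \<le> B*K
              \<and> (\<Sum>l=1..r. l * m l) + b * t = n + a * t}"
  shows "exp(-4*A*(A+B)/\<delta>) * (\<Sum>m\<in>G. Pm q k r m) \<le> (\<Sum>m\<in>seqs n k r. Pm q k r m)"
proof -
  define \<phi> where "\<phi> = (\<lambda>m::nat\<Rightarrow>nat. m(a := m a - t, b := m b + t))"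
  have fin: "finite G" using G by (rule finite_subset) (simp add: Dset_finite)
  have key: "t \<le> m a \<and> exp(-4*A*(A+B)/\<delta>) * Pm q k r m \<le> Pm q k r (\<phi> m)" if m: "m \<in> G" for m
    using shift_Pm[OF ab qnn \<delta> K AB, of m t] m G t unfolding \<phi>_def by auto
  have inj: "inj_on \<phi> G"
    unfolding \<phi>_def by (rule inj_on_subset[OF shift_inj[OF ab(3), of t]]) (use key in \<open>auto simp: \<phi>_def\<close>)
  have img: "\<phi> ` G \<subseteq> seqs n k r"
  proof
    fix x assume "x \<in> \<phi> ` G"
    then obtain m where m: "m \<in> G" and x: "x = \<phi> m" by auto
    have mD: "m \<in> Dset k r" and Sm: "(\<Sum>l=1..r. l * m l) + b * t = n + a * t" using m G by auto
    have tm: "t \<le> m a" using key[OF m] by simp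
    note sd = shift_Dset[OF ab mD tm]
    have "(\<Sum>l=1..r. l * x l) = n" using sd(2) Sm unfolding x \<phi>_def by linarith
    thus "x \<in> seqs n k r" using sd(1) unfolding seqs_Dset x \<phi>_def by auto
  qed
  have "exp(-4*A*(A+B)/\<delta>) * (\<Sum>m\<in>G. Pm q k r m) = (\<Sum>m\<in>G. exp(-4*A*(A+B)/\<delta>) * Pm q k r m)"
    by (simp add: sum_distrib_left)
  also have "\<dots> \<le> (\<Sum>m\<in>G. Pm q k r (\<phi> m))" by (rule sum_mono) (use key in auto)
  also have "\<dots> = (\<Sum>m\<in>\<phi> ` G. Pm q k r m)" using sum.reindex[OF inj, of "Pm q k r"] by simp
  also have "\<dots> \<le> (\<Sum>m\<in>seqs n k r. Pm q k r m)"
    by (rule sum_mono2[OF finite_subset[OF seqs_sub Dset_finite] img]) (simp add: Pm_nonneg qnn)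
  finally show ?thesis .
qed

lemma sum_ind: fixes f :: "nat \<Rightarrow> real"
  assumes "j \<in> A" "finite A"
  shows "(\<Sum>l\<in>A. (if l = j then 1 else 0) * f l) = f j"
proof -
  have "(\<Sum>l\<in>A. (if l = j then 1 else 0) * f l) = (\<Sum>l\<in>A. if l = j then f l else 0)"
    by (rule sum.cong) auto
  thus ?thesis using assms by simp
qed

lemma sq_gt: fixes x c :: real assumes "\<bar>x\<bar> > c" "c \<ge> 0" shows "x^2 > c^2"
proof -
  have "\<bar>x\<bar>^2 > c^2" using assms by (intro power_strict_mono) auto
  thus ?thesis by simp
qed

context normq begin

lemma var_ind:
  assumes j: "j \<in> {1..r}"
  shows "(\<Sum>m\<in>Dset k r. Pm q k r m * (real (m j) - real k * q j)^2) \<le> real k / 4"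
proof -
  have "(\<Sum>m\<in>Dset k r. Pm q k r m * (real (m j) - real k * q j)^2)
      = real k * ((\<Sum>l=1..r. (if l = j then 1 else 0)^2 * q l) - (\<Sum>l=1..r. (if l = j then 1 else 0) * q l)^2)"
    using var[where c="\<lambda>l. if l = j then 1 else 0" and k=k] j by (simp add: sum_ind)
  also have "\<dots> = real k * (q j - (q j)^2)"
  proof -
    have "(\<Sum>l=1..r. (if l = j then 1 else 0)^2 * q l) = (\<Sum>l=1..r. (if l = j then 1 else 0) * q l)"
      by (rule sum.cong) auto
    hence "(\<Sum>l=1..r. (if l = j then 1 else 0)^2 * q l) = q j" using sum_ind[OF j, of q] by simp
    thus ?thesis using sum_ind[OF j, of q] by simp
  qed
  also have "\<dots> \<le> real k * (1/4)"
  proof (rule mult_left_mono)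
    have "(q j - 1/2)^2 \<ge> 0" by simp
    thus "q j - (q j)^2 \<le> 1/4" by (simp add: power2_eq_square algebra_simps)
  qed simp
  finally show ?thesis by simp
qed

lemma var_S:
  assumes qnn: "\<And>l. q l \<ge> 0"
  shows "(\<Sum>m\<in>Dset k r. Pm q k r m * (real (\<Sum>l=1..r. l * m l) - real k * (\<Sum>l=1..r. real l * q l))^2)
      \<le> real k * (real r)^2"
proof -
  have "(\<Sum>m\<in>Dset k r. Pm q k r m * (real (\<Sum>l=1..r. l * m l) - real k * (\<Sum>l=1..r. real l * q l))^2)
      = real k * ((\<Sum>l=1..r. (real l)^2 * q l) - (\<Sum>l=1..r. real l * q l)^2)"
    using var[where c=real and k=k] by simp
  also have "\<dots> \<le> real k * (\<Sum>l=1..r. (real l)^2 * q l)" by (intro mult_left_mono) auto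
  also have "(\<Sum>l=1..r. (real l)^2 * q l) \<le> (\<Sum>l=1..r. (real r)^2 * q l)"
    by (intro sum_mono mult_right_mono power_mono) (auto simp: qnn)
  also have "\<dots> = (real r)^2" using sumq by (simp add: sum_distrib_left[symmetric])
  finally show ?thesis by (simp add: mult_left_mono)
qed

end

lemma ge_of: fixes P c f :: real assumes "0 \<le> P" "c > 0" "f \<ge> c" shows "P \<le> P * f / c"
proof -
  have "P * c \<le> P * f" using assms by (intro mult_left_mono) auto
  thus ?thesis using assms by (simp add: field_simps)
qed

context normq begin

lemma step1:
  assumes r: "r \<ge> 2" and qnn: "\<And>l. q l \<ge> 0" and k: "k \<ge> 1"
   and mean: "real k * (\<Sum>l=1..r. real l * q l) = real n"
   and T: "real T + 1 > 2 * real r * sqrt (real k)"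
  shows "(\<Sum>m\<in>{m\<in>Dset k r. \<bar>real (m 1) - real k * q 1\<bar> \<le> 2 * sqrt (real k) \<and> \<bar>real (m 2) - real k * q 2\<bar> \<le> 2 * sqrt (real k)
            \<and> (\<Sum>l=1..r. l * m l) \<in> {n-T..n+T}}. Pm q k r m) \<ge> 1/4"
proof -
  define K where "K = sqrt (real k)"
  have K0: "K > 0" using k by (simp add: K_def)
  have kK: "real k = K^2" by (simp add: K_def)
  have kpos: "real k > 0" using k by simp
  define GN where "GN = {m\<in>Dset k r. \<bar>real (m 1) - real k * q 1\<bar> \<le> 2 * K \<and> \<bar>real (m 2) - real k * q 2\<bar> \<le> 2 * K
            \<and> (\<Sum>l=1..r. l * m l) \<in> {n-T..n+T}}"
  define f1 where "f1 m = (real (m 1) - real k * q 1)^2" for m :: "nat \<Rightarrow> nat"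
  define f2 where "f2 m = (real (m 2) - real k * q 2)^2" for m :: "nat \<Rightarrow> nat"
  define f3 where "f3 m = (real (\<Sum>l=1..r. l * m l) - real n)^2" for m :: "nat \<Rightarrow> nat"
  define c1 where "c1 = 4 * real k"
  define c3 where "c3 = 4 * (real r)^2 * real k"
  have c1: "c1 > 0" "c1 = (2*K)^2" using kpos kK by (auto simp: c1_def power_mult_distrib)
  have c3: "c3 > 0" "c3 = (2*real r*K)^2" using kpos kK r by (auto simp: c3_def power_mult_distrib)
  have pw: "Pm q k r m \<le> (if m \<in> GN then Pm q k r m else 0) + Pm q k r m * f1 m / c1
      + Pm q k r m * f2 m / c1 + Pm q k r m * f3 m / c3" if m: "m \<in> Dset k r" for m
  proof -
    have P0: "Pm q k r m \<ge> 0" by (rule Pm_nonneg[OF qnn])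
    have t1: "Pm q k r m * f1 m / c1 \<ge> 0" "Pm q k r m * f2 m / c1 \<ge> 0" "Pm q k r m * f3 m / c3 \<ge> 0"
      using P0 c1 c3 by (auto simp: f1_def f2_def f3_def)
    show ?thesis
    proof (cases "m \<in> GN")
      case True thus ?thesis using t1 by simp
    next
      case False
      hence "\<not> \<bar>real (m 1) - real k * q 1\<bar> \<le> 2 * K \<or> \<not> \<bar>real (m 2) - real k * q 2\<bar> \<le> 2 * K
            \<or> (\<Sum>l=1..r. l * m l) \<notin> {n-T..n+T}" using m unfolding GN_def by auto
      moreover have "\<not> \<bar>real (m 1) - real k * q 1\<bar> \<le> 2 * K \<Longrightarrow> Pm q k r m \<le> Pm q k r m * f1 m / c1"
      proof -
        assume "\<not> \<bar>real (m 1) - real k * q 1\<bar> \<le> 2 * K"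
        hence "f1 m \<ge> c1" unfolding f1_def c1(2) using K0 by (intro less_imp_le sq_gt) auto
        thus "Pm q k r m \<le> Pm q k r m * f1 m / c1" by (rule ge_of[OF P0 c1(1)])
      qed
      moreover have "\<not> \<bar>real (m 2) - real k * q 2\<bar> \<le> 2 * K \<Longrightarrow> Pm q k r m \<le> Pm q k r m * f2 m / c1"
      proof -
        assume "\<not> \<bar>real (m 2) - real k * q 2\<bar> \<le> 2 * K"
        hence "f2 m \<ge> c1" unfolding f2_def c1(2) using K0 by (intro less_imp_le sq_gt) auto
        thus "Pm q k r m \<le> Pm q k r m * f2 m / c1" by (rule ge_of[OF P0 c1(1)])
      qed
      moreover have "(\<Sum>l=1..r. l * m l) \<notin> {n-T..n+T} \<Longrightarrow> Pm q k r m \<le> Pm q k r m * f3 m / c3"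
      proof -
        assume nJ: "(\<Sum>l=1..r. l * m l) \<notin> {n-T..n+T}"
        have "\<bar>real (\<Sum>l=1..r. l * m l) - real n\<bar> \<ge> real T + 1"
        proof (cases "(\<Sum>l=1..r. l * m l) < n - T")
          case True
          hence "(\<Sum>l=1..r. l * m l) + T + 1 \<le> n" by linarith
          hence "real (\<Sum>l=1..r. l * m l) + real T + 1 \<le> real n" by linarith
          thus ?thesis by linarith
        next
          case False
          hence "(\<Sum>l=1..r. l * m l) > n + T" using nJ by auto
          hence "(\<Sum>l=1..r. l * m l) \<ge> n + T + 1" by linarith
          hence "real (\<Sum>l=1..r. l * m l) \<ge> real n + real T + 1" by linarith
          thus ?thesis by linarith
        qed
        hence "\<bar>real (\<Sum>l=1..r. l * m l) - real n\<bar> > 2 * real r * K" using T unfolding K_def by linarith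
        hence "f3 m \<ge> c3" unfolding f3_def c3(2) using K0 r by (intro less_imp_le sq_gt) auto
        thus "Pm q k r m \<le> Pm q k r m * f3 m / c3" by (rule ge_of[OF P0 c3(1)])
      qed
      ultimately have "Pm q k r m \<le> Pm q k r m * f1 m / c1 \<or> Pm q k r m \<le> Pm q k r m * f2 m / c1
          \<or> Pm q k r m \<le> Pm q k r m * f3 m / c3" by blast
      moreover have "(if m \<in> GN then Pm q k r m else 0) = 0" using False by simp
      ultimately show ?thesis using t1 by linarith
    qed
  qed
  have "1 = (\<Sum>m\<in>Dset k r. Pm q k r m)" by (simp add: mass)
  also have "\<dots> \<le> (\<Sum>m\<in>Dset k r. (if m \<in> GN then Pm q k r m else 0) + Pm q k r m * f1 m / c1
      + Pm q k r m * f2 m / c1 + Pm q k r m * f3 m / c3)" by (rule sum_mono) (rule pw)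
  also have "\<dots> = (\<Sum>m\<in>Dset k r. if m \<in> GN then Pm q k r m else 0) + (\<Sum>m\<in>Dset k r. Pm q k r m * f1 m) / c1
      + (\<Sum>m\<in>Dset k r. Pm q k r m * f2 m) / c1 + (\<Sum>m\<in>Dset k r. Pm q k r m * f3 m) / c3"
    by (simp add: sum.distrib sum_divide_distrib)
  also have "(\<Sum>m\<in>Dset k r. if m \<in> GN then Pm q k r m else 0) = (\<Sum>m\<in>GN. Pm q k r m)"
  proof -
    have eq: "GN = {m\<in>Dset k r. m \<in> GN}" unfolding GN_def by auto
    have "(\<Sum>m\<in>{m\<in>Dset k r. m \<in> GN}. Pm q k r m) = (\<Sum>m\<in>Dset k r. if m \<in> GN then Pm q k r m else 0)"
      by (rule sum.inter_filter[OF Dset_finite])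
    thus ?thesis by (simp only: eq[symmetric])
  qed
  also have "(\<Sum>m\<in>Dset k r. Pm q k r m * f1 m) / c1 \<le> (real k / 4) / c1"
    unfolding f1_def using var_ind[of 1] r c1 by (intro divide_right_mono) auto
  also have "(\<Sum>m\<in>Dset k r. Pm q k r m * f2 m) / c1 \<le> (real k / 4) / c1"
    unfolding f2_def using var_ind[of 2] r c1 by (intro divide_right_mono) auto
  also have "(\<Sum>m\<in>Dset k r. Pm q k r m * f3 m) / c3 \<le> (real k * (real r)^2) / c3"
    unfolding f3_def using var_S[OF qnn, of k] mean c3 by (intro divide_right_mono) auto
  also have "(real k / 4) / c1 = 1/16" using kpos by (simp add: c1_def)
  also have "(real k * (real r)^2) / c3 = 1/4" using kpos r by (simp add: c3_def)
  finally have "1 \<le> (\<Sum>m\<in>GN. Pm q k r m) + 1/16 + 1/16 + 1/4" by simp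
  thus ?thesis unfolding GN_def K_def by simp
qed

end

context normq begin

lemma local_lower:
  assumes r: "r \<ge> 2" and qnn: "\<And>l. q l \<ge> 0" and \<delta>: "\<delta> > 0" "q 1 \<ge> \<delta>" "q 2 \<ge> \<delta>" and k: "k \<ge> 1"
   and mean: "real k * (\<Sum>l=1..r. real l * q l) = real n"
   and large: "4*(2*real r + 2) \<le> \<delta> * sqrt (real k)"
  shows "(\<Sum>m\<in>seqs n k r. Pm q k r m) \<ge> exp(-4*(2*real r)*(2*real r+2)/\<delta>) / (12 * (2*real r) * sqrt (real k))"
proof -
  define K where "K = sqrt (real k)"
  define A where "A = 2 * real r"
  define B :: real where "B = 2"
  define T where "T = nat \<lfloor>A*K\<rfloor>"
  define \<gamma> where "\<gamma> = exp(-4*A*(A+B)/\<delta>)"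
  define g where "g = (\<Sum>m\<in>seqs n k r. Pm q k r m)"
  define S where "S m = (\<Sum>l=1..r. l * m l)" for m :: "nat \<Rightarrow> nat"
  have K0: "K > 0" and K1: "K \<ge> 1" using k by (auto simp: K_def)
  have kK: "real k = K^2" by (simp add: K_def)
  have A0: "A \<ge> 0" "A \<ge> 4" using r by (auto simp: A_def)
  have AK0: "A * K \<ge> 0" using A0 K0 by simp
  have T1: "real T \<le> A * K" unfolding T_def using AK0 by linarith
  have T2: "real T + 1 > A * K" unfolding T_def using AK0 by linarith
  have g0: "\<gamma> > 0" by (simp add: \<gamma>_def)
  define GN where "GN = {m\<in>Dset k r. \<bar>real (m 1) - real k * q 1\<bar> \<le> 2 * sqrt (real k) \<and> \<bar>real (m 2) - real k * q 2\<bar> \<le> 2 * sqrt (real k)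
            \<and> (\<Sum>l=1..r. l * m l) \<in> {n-T..n+T}}"
  have s1: "(\<Sum>m\<in>GN. Pm q k r m) \<ge> 1/4"
    unfolding GN_def by (rule step1[OF r qnn k mean]) (use T2 in \<open>simp add: A_def K_def\<close>)
  have ABd: "4*(A+B) \<le> \<delta>*K" using large by (simp add: A_def B_def K_def)
  have AB: "A \<ge> 0" "B \<ge> 0" using A0 by (auto simp: B_def)
  have r12: "1 \<in> {1..r}" "2 \<in> {1..r}" using r by auto
  have each: "(\<Sum>m\<in>{m\<in>GN. S m = j}. Pm q k r m) \<le> g / \<gamma>" if j: "j \<in> {n-T..n+T}" for j
  proof -
    have "\<gamma> * (\<Sum>m\<in>{m\<in>GN. S m = j}. Pm q k r m) \<le> g"
    proof (cases "j \<le> n")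
      case True
      define t where "t = n - j"
      have t: "real t \<le> A * K" using T1 j True unfolding t_def by auto
      show ?thesis unfolding \<gamma>_def g_def
        by (rule step2[OF r12 _ qnn \<delta> K0 kK AB ABd t])
           (use True in \<open>auto simp: GN_def S_def t_def B_def K_def\<close>)
    next
      case False
      define t where "t = j - n"
      have t: "real t \<le> A * K" using T1 j False unfolding t_def by auto
      have "exp(-4*A*(A+B)/\<delta>) * (\<Sum>m\<in>{m\<in>GN. S m = j}. Pm q k r m) \<le> (\<Sum>m\<in>seqs n k r. Pm q k r m)"
        by (rule step2[OF r12(2,1) _ qnn \<delta>(1,3,2) K0 kK AB ABd t])
           (use False in \<open>auto simp: GN_def S_def t_def B_def K_def\<close>)
      thus ?thesis unfolding \<gamma>_def g_def .
    qed
    thus ?thesis using g0 by (simp add: field_simps mult.commute)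
  qed
  have finGN: "finite GN" unfolding GN_def by (rule finite_subset[OF _ Dset_finite]) auto
  have "(\<Sum>m\<in>GN. Pm q k r m) = (\<Sum>j\<in>{n-T..n+T}. \<Sum>m\<in>{m\<in>GN. S m = j}. Pm q k r m)"
    by (rule sum.group[OF finGN, symmetric]) (auto simp: GN_def S_def)
  also have "\<dots> \<le> (\<Sum>j\<in>{n-T..n+T}. g / \<gamma>)" by (rule sum_mono) (rule each)
  also have "\<dots> = real (card {n-T..n+T}) * (g / \<gamma>)" by simp
  also have "\<dots> \<le> (2 * real T + 1) * (g / \<gamma>)"
  proof (rule mult_right_mono)
    have "card {n-T..n+T} \<le> 2 * T + 1" by simp
    thus "real (card {n-T..n+T}) \<le> 2 * real T + 1" by linarith
    have "g \<ge> 0" unfolding g_def by (intro sum_nonneg Pm_nonneg qnn)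
    thus "0 \<le> g / \<gamma>" using g0 by simp
  qed
  finally have "1/4 \<le> (2 * real T + 1) * (g / \<gamma>)" using s1 by linarith
  hence "\<gamma> \<le> 4 * (2 * real T + 1) * g" using g0 by (simp add: field_simps)
  also have "4 * (2 * real T + 1) \<le> 12 * (A * K)"
  proof -
    have "A * K \<ge> 4 * 1" using A0 K1 by (intro mult_mono) auto
    hence h: "A * K \<ge> 4" by simp
    show ?thesis using T1 h by (smt (verit))
  qed
  hence "4 * (2 * real T + 1) * g \<le> 12 * (A * K) * g"
    by (rule mult_right_mono) (simp add: g_def sum_nonneg Pm_nonneg qnn)
  finally have "\<gamma> \<le> 12 * (A * K) * g" .
  hence "\<gamma> / (12 * A * K) \<le> g" using A0 K0 by (simp add: field_simps)
  thus ?thesis by (simp add: \<gamma>_def g_def A_def B_def K_def)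
qed

end

definition Mt :: "nat \<Rightarrow> real \<Rightarrow> real" where
  "Mt r s = (\<Sum>l=1..r. real l * trees l * s^(l-1) / fact l) / (\<Sum>l=1..r. trees l * s^(l-1) / fact l)"

definition Nt :: "nat \<Rightarrow> real \<Rightarrow> real" where
  "Nt r s = (\<Sum>l=1..r. real l * trees l * s^(r-l) / fact l) / (\<Sum>l=1..r. trees l * s^(r-l) / fact l)"

lemma near0:
  fixes g :: "real \<Rightarrow> real"
  assumes "isCont g 0" "e > 0"
  shows "\<exists>d>0. \<forall>x. 0 < x \<and> x < d \<longrightarrow> \<bar>g x - g 0\<bar> < e"
proof -
  from LIM_D[OF assms(1)[unfolded isCont_def] assms(2)]
  obtain d where "d > 0" "\<forall>x. x \<noteq> 0 \<and> norm (x - 0) < d \<longrightarrow> norm (g x - g 0) < e" by blast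
  thus ?thesis by (intro exI[of _ d]) auto
qed

lemma sum_first: fixes h :: "nat \<Rightarrow> real" assumes "r \<ge> 1"
  shows "(\<Sum>l=1..r. h l) = h 1 + (\<Sum>l\<in>{1..r}-{1}. h l)"
  using assms by (subst sum.remove[of _ 1]) auto

lemma sum_last: fixes h :: "nat \<Rightarrow> real" assumes "r \<ge> 1"
  shows "(\<Sum>l=1..r. h l) = h r + (\<Sum>l\<in>{1..r}-{r}. h l)"
  using assms by (subst sum.remove[of _ r]) auto

lemma Mt_0: assumes "r \<ge> 1" shows "Mt r 0 = 1"
proof -
  have a: "(\<Sum>l\<in>{1..r}-{1}. real l * trees l * 0^(l-1) / fact l) = 0" by (rule sum.neutral) auto
  have b: "(\<Sum>l\<in>{1..r}-{1}. trees l * (0::real)^(l-1) / fact l) = 0" by (rule sum.neutral) auto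
  show ?thesis unfolding Mt_def using assms
    by (simp only: sum_first[OF assms] a b) (simp add: trees_def)
qed

lemma Nt_0: assumes "r \<ge> 1" shows "Nt r 0 = real r"
proof -
  have a: "(\<Sum>l\<in>{1..r}-{r}. real l * trees l * 0^(r-l) / fact l) = 0" by (rule sum.neutral) auto
  have b: "(\<Sum>l\<in>{1..r}-{r}. trees l * (0::real)^(r-l) / fact l) = 0" by (rule sum.neutral) auto
  have "trees r / fact r \<noteq> 0" using trees_pos[OF assms] by simp
  thus ?thesis unfolding Nt_def using assms
    by (simp only: sum_last[OF assms] a b) simp
qed

lemma Mt_cont: assumes "r \<ge> 1" shows "isCont (Mt r) 0"
proof -
  have "(\<Sum>l=1..r. trees l * (0::real)^(l-1) / fact l) \<noteq> 0"
    using Mt_0[OF assms] unfolding Mt_def by auto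
  thus ?thesis unfolding Mt_def by (intro continuous_intros) auto
qed

lemma Nt_cont: assumes "r \<ge> 1" shows "isCont (Nt r) 0"
proof -
  have "(\<Sum>l=1..r. trees l * (0::real)^(r-l) / fact l) \<noteq> 0"
  proof
    assume "(\<Sum>l=1..r. trees l * (0::real)^(r-l) / fact l) = 0"
    hence "Nt r 0 = 0" unfolding Nt_def by simp
    thus False using Nt_0[OF assms] assms by simp
  qed
  thus ?thesis unfolding Nt_def by (intro continuous_intros) auto
qed

definition Mn :: "nat \<Rightarrow> real \<Rightarrow> real" where
  "Mn r s = (\<Sum>l=1..r. real l * qs r s l)"

lemma Mn_Mt: assumes "r \<ge> 1" "s > 0" shows "Mn r s = Mt r s"
proof -
  have 1: "(\<Sum>l=1..r. real l * qs r s l) = (\<Sum>l=1..r. real l * trees l * s^l / fact l) / F r s"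
    unfolding qs_def sum_divide_distrib by (rule sum.cong) auto
  have 2: "(\<Sum>l=1..r. real l * trees l * s^l / fact l) = s * (\<Sum>l=1..r. real l * trees l * s^(l-1) / fact l)"
    unfolding sum_distrib_left
  proof (rule sum.cong)
    fix l assume "l \<in> {1..r}"
    hence "s^l = s * s^(l-1)" by (cases l) auto
    thus "real l * trees l * s^l / fact l = s * (real l * trees l * s^(l-1) / fact l)" by simp
  qed simp
  have 3: "F r s = s * (\<Sum>l=1..r. trees l * s^(l-1) / fact l)"
    unfolding F_def sum_distrib_left
  proof (rule sum.cong)
    fix l assume "l \<in> {1..r}"
    hence "s^l = s * s^(l-1)" by (cases l) auto
    thus "trees l * s^l / fact l = s * (trees l * s^(l-1) / fact l)" by simp
  qed simp
  show ?thesis unfolding Mn_def Mt_def 1 2 3 using assms by simp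
qed

lemma Mn_Nt: assumes "r \<ge> 1" "s > 0" shows "Mn r s = Nt r (1/s)"
proof -
  have 1: "(\<Sum>l=1..r. real l * qs r s l) = (\<Sum>l=1..r. real l * trees l * s^l / fact l) / F r s"
    unfolding qs_def sum_divide_distrib by (rule sum.cong) auto
  have e: "s^l = s^r * (1/s)^(r-l)" if "l \<in> {1..r}" for l
  proof -
    have "s^r = s^l * s^(r-l)" using that by (simp add: power_add[symmetric])
    thus ?thesis using assms by (simp add: power_one_over)
  qed
  have 2: "(\<Sum>l=1..r. real l * trees l * s^l / fact l) = s^r * (\<Sum>l=1..r. real l * trees l * (1/s)^(r-l) / fact l)"
    unfolding sum_distrib_left
  proof (rule sum.cong[OF refl])
    fix l assume l: "l \<in> {1..r}"
    show "real l * trees l * s^l / fact l = s^r * (real l * trees l * (1/s)^(r-l) / fact l)"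
      by (subst e[OF l]) simp
  qed
  have 3: "F r s = s^r * (\<Sum>l=1..r. trees l * (1/s)^(r-l) / fact l)"
    unfolding F_def sum_distrib_left
  proof (rule sum.cong[OF refl])
    fix l assume l: "l \<in> {1..r}"
    show "trees l * s^l / fact l = s^r * (trees l * (1/s)^(r-l) / fact l)"
      by (subst e[OF l]) simp
  qed
  show ?thesis unfolding Mn_def Nt_def 1 2 3 using assms by simp
qed

lemma Mn_cont: assumes "r \<ge> 1" "0 < a" shows "continuous_on {a..b} (Mn r)"
proof -
  have "continuous_on {a..b} (\<lambda>s. (\<Sum>l=1..r. real l * (trees l * s ^ l / fact l / F r s)))"
    unfolding F_def using F_pos[OF assms(1)] assms(2) unfolding F_def
    by (intro continuous_intros) (auto simp: order.strict_trans2 intro!: less_imp_neq[symmetric])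
  thus ?thesis unfolding Mn_def qs_def .
qed

lemma saddle_range:
  assumes r: "r \<ge> 2" and \<eta>: "0 < \<eta>" "\<eta> < 1"
  shows "\<exists>slo shi. 0 < slo \<and> slo \<le> shi \<and> Mn r slo < 1 + \<eta> \<and> Mn r shi > real r / (1 + \<eta>)"
proof -
  have r1: "r \<ge> 1" using r by simp
  obtain d1 where d1: "d1 > 0" "\<forall>x. 0 < x \<and> x < d1 \<longrightarrow> \<bar>Mt r x - Mt r 0\<bar> < \<eta>"
    using near0[OF Mt_cont[OF r1] \<eta>(1)] by blast
  define e where "e = real r - real r / (1 + \<eta>)"
  have e0: "e > 0" unfolding e_def using r \<eta> by (simp add: field_simps)
  obtain d2 where d2: "d2 > 0" "\<forall>x. 0 < x \<and> x < d2 \<longrightarrow> \<bar>Nt r x - Nt r 0\<bar> < e"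
    using near0[OF Nt_cont[OF r1] e0] by blast
  define slo where "slo = d1 / 2"
  define shi where "shi = slo + 2 / d2"
  have slo: "0 < slo" "slo < d1" using d1 by (auto simp: slo_def)
  have shi: "slo \<le> shi" "shi > 2 / d2" using d2 slo by (auto simp: shi_def)
  have shi0: "shi > 0" using shi slo by linarith
  have "1 / shi < d2"
  proof -
    have "d2 * shi > d2 * (2 / d2)" using shi d2 by (intro mult_strict_left_mono) auto
    hence "d2 * shi > 2" using d2 by simp
    thus ?thesis using shi0 by (simp add: field_simps)
  qed
  hence "\<bar>Nt r (1/shi) - Nt r 0\<bar> < e" using d2 shi0 by simp
  hence "Mn r shi > real r / (1 + \<eta>)" using Nt_0[OF r1] Mn_Nt[OF r1 shi0] unfolding e_def by linarith
  moreover have "Mn r slo < 1 + \<eta>" using d1(2) slo Mt_0[OF r1] Mn_Mt[OF r1 slo(1)] by force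
  ultimately show ?thesis using slo shi by blast
qed

lemma saddle:
  assumes r: "r \<ge> 2" and slo: "0 < slo" "slo \<le> shi" "Mn r slo < 1 + \<eta>" "Mn r shi > real r / (1 + \<eta>)"
    and \<eta>: "0 < \<eta>" "\<eta> < 1" and k: "k \<ge> 1" "real k < (1 - \<eta>) * real n" "real r * real k > real n * (1 + \<eta>)"
  shows "\<exists>s. slo \<le> s \<and> s \<le> shi \<and> real k * Mn r s = real n"
proof -
  have kp: "real k > 0" using k by simp
  have "(1 + \<eta>) * real k < (1 + \<eta>) * ((1 - \<eta>) * real n)" using k \<eta> by (intro mult_strict_left_mono) auto
  also have "\<dots> \<le> real n" using \<eta> by (simp add: algebra_simps)
  finally have "(1 + \<eta>) * real k < real n" .
  moreover have "real k * Mn r slo \<le> real k * (1 + \<eta>)" using slo(3) kp by (intro mult_left_mono) auto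
  ultimately have "real k * Mn r slo \<le> real n" by (simp add: mult.commute)
  hence a: "Mn r slo \<le> real n / real k" using kp by (simp add: field_simps)
  have "real n / real k < real r / (1 + \<eta>)" using k(3) kp \<eta> by (simp add: field_simps)
  hence b: "real n / real k \<le> Mn r shi" using slo(4) by linarith
  obtain s where "slo \<le> s" "s \<le> shi" "Mn r s = real n / real k"
    using IVT'[OF a b slo(2) Mn_cont] r slo(1) by auto
  thus ?thesis using kp by (intro exI[of _ s]) auto
qed

lemma F_mono: assumes "0 < s" "s \<le> s'" shows "F r s \<le> F r s'"
  unfolding F_def by (intro sum_mono divide_right_mono mult_left_mono power_mono) (use assms in \<open>auto simp: trees_nonneg\<close>)

lemma q12:
  assumes r: "r \<ge> 2" and s: "0 < slo" "slo \<le> s" "s \<le> shi"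
  shows "qs r s 1 \<ge> min (slo / F r shi) (slo^2 / 2 / F r shi)" "qs r s 2 \<ge> min (slo / F r shi) (slo^2 / 2 / F r shi)"
    "min (slo / F r shi) (slo^2 / 2 / F r shi) > 0"
proof -
  have r1: "r \<ge> 1" using r by simp
  have s0: "s > 0" using s by simp
  have Fs: "0 < F r s" "F r s \<le> F r shi" using F_pos[OF r1 s0] F_mono[OF s0 s(3)] by auto
  have "qs r s 1 = s / F r s" by (simp add: qs_def trees_def)
  also have "\<dots> \<ge> slo / F r shi" using Fs s by (intro frac_le) auto
  finally show "qs r s 1 \<ge> min (slo / F r shi) (slo^2 / 2 / F r shi)" by linarith
  have "qs r s 2 = s^2 / 2 / F r s" by (simp add: qs_def trees_def)
  also have "\<dots> \<ge> slo^2 / 2 / F r shi" using Fs s by (intro divide_right_mono frac_le power_mono) auto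
  finally show "qs r s 2 \<ge> min (slo / F r shi) (slo^2 / 2 / F r shi)" by linarith
  show "min (slo / F r shi) (slo^2 / 2 / F r shi) > 0" using F_pos[OF r1] s by auto
qed

lemma fact_mult_le: "(fact a :: real) * fact b \<le> fact (a + b)"
proof -
  have "fact a * fact b * ((a + b) choose a) = (fact (a + b) :: nat)"
    using binomial_fact_lemma[of a "a + b"] by simp
  moreover have "((a + b) choose a) \<ge> 1" by (simp add: Suc_leI)
  ultimately have "fact a * fact b \<le> (fact (a + b) :: nat)"
    by (metis mult.right_neutral mult_le_mono2)
  hence "real (fact a * fact b) \<le> real (fact (a + b))" by linarith
  thus ?thesis by simp
qed

lemma prod_fact_le: "finite A \<Longrightarrow> (\<Prod>l\<in>A. fact (m l) :: real) \<le> fact (\<Sum>l\<in>A. m l)"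
proof (induction A rule: finite_induct)
  case empty then show ?case by simp
next
  case (insert x F)
  have "(\<Prod>l\<in>insert x F. fact (m l) :: real) = fact (m x) * (\<Prod>l\<in>F. fact (m l))" using insert by simp
  also have "\<dots> \<le> fact (m x) * fact (\<Sum>l\<in>F. m l)" by (intro mult_left_mono insert.IH) auto
  also have "\<dots> \<le> fact (m x + (\<Sum>l\<in>F. m l))" by (rule fact_mult_le)
  finally show ?case using insert by simp
qed

lemma Pm_lower:
  assumes q: "\<And>l. l \<in> {1..r} \<Longrightarrow> q l \<ge> \<rho>" and \<rho>: "\<rho> \<ge> 0" and m: "m \<in> Dset k r"
  shows "Pm q k r m \<ge> \<rho> ^ k"
proof -
  have k: "(\<Sum>l=1..r. m l) = k" using m by (simp add: Dset_def)
  have "\<rho> ^ k = (\<Prod>l=1..r. \<rho> ^ m l)" unfolding k[symmetric] by (rule power_sum)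
  also have "\<dots> \<le> (\<Prod>l=1..r. q l ^ m l)" using q \<rho> by (intro prod_mono power_mono conjI) auto
  also have "\<dots> \<le> (\<Prod>l=1..r. q l ^ m l) * (fact k / (\<Prod>l=1..r. fact (m l)))"
  proof -
    have "(\<Prod>l=1..r. fact (m l) :: real) \<le> fact k" using prod_fact_le[of "{1..r}" m] k by simp
    moreover have "(\<Prod>l=1..r. fact (m l) :: real) > 0" by (intro prod_pos) auto
    ultimately have "fact k / (\<Prod>l=1..r. fact (m l)) \<ge> (1::real)" by simp
    moreover have "(\<Prod>l=1..r. q l ^ m l) \<ge> 0" using q \<rho> by (intro prod_nonneg zero_le_power) (auto intro: order_trans)
    ultimately show ?thesis by (metis mult.right_neutral mult_left_mono)
  qed
  also have "\<dots> = Pm q k r m" unfolding Pm_def by (simp add: prod_dividef)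
  finally show ?thesis .
qed

lemma exists_seq: "r \<ge> 1 \<Longrightarrow> k \<le> n \<Longrightarrow> n \<le> r * k \<Longrightarrow> \<exists>m. m \<in> seqs n k r"
proof (induction k arbitrary: n)
  case 0
  hence "n = 0" by simp
  thus ?case by (intro exI[of _ "\<lambda>_. 0"]) (simp add: seqs_def)
next
  case (Suc k)
  define l where "l = min r (n - k)"
  have l: "l \<in> {1..r}" using Suc.prems by (auto simp: l_def)
  have krk: "k \<le> r * k" using Suc.prems(1) by simp
  have "k \<le> n - l" "n - l \<le> r * k" using Suc.prems krk by (auto simp: l_def min_def)
  then obtain m where m: "m \<in> seqs (n - l) k r" using Suc.IH Suc.prems(1) by blast
  have ln: "l \<le> n" using Suc.prems by (auto simp: l_def)
  define m' where "m' = m(l := m l + 1)"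
  have "m' \<in> Dset (Suc k) r" using upd_bij[OF l, of k] m unfolding m'_def seqs_Dset bij_betw_def by auto
  moreover have "(\<Sum>i=1..r. i * m' i) = n"
  proof -
    have A: "(\<Sum>i=1..r. g i) = g l + (\<Sum>i\<in>{1..r}-{l}. g i)" for g :: "nat \<Rightarrow> nat"
      using l by (simp add: sum.remove)
    have B: "(\<Sum>i\<in>{1..r}-{l}. i * m' i) = (\<Sum>i\<in>{1..r}-{l}. i * m i)" by (rule sum.cong) (auto simp: m'_def)
    have "(\<Sum>i=1..r. i * m i) = n - l" using m by (simp add: seqs_def)
    thus ?thesis using A[of "\<lambda>i. i * m' i"] A[of "\<lambda>i. i * m i"] B ln by (simp add: m'_def)
  qed
  ultimately show ?case by (auto simp: seqs_Dset)
qed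

definition rho :: "nat \<Rightarrow> real" where "rho r = 1 / (fact r * F r 1)"

lemma rho_pos: "r \<ge> 1 \<Longrightarrow> rho r > 0" using F_pos[of r 1] by (simp add: rho_def)

lemma small_case:
  assumes r: "r \<ge> 1" and kn: "k \<le> n" "n \<le> r * k"
  shows "Q n k r \<ge> rho r ^ k * bound n k r"
proof -
  have F0: "F r 1 > 0" using F_pos[OF r] by simp
  have ql: "qs r 1 l \<ge> rho r" if l: "l \<in> {1..r}" for l
  proof -
    have t: "trees l \<ge> 1" using l by (simp add: trees_def)
    have f: "fact l \<le> (fact r :: real)" using l by (intro fact_mono) auto
    have "rho r = 1 / fact r / F r 1" by (simp add: rho_def)
    also have "\<dots> \<le> trees l / fact l / F r 1" using t f F0 by (intro divide_right_mono frac_le) auto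
    finally show ?thesis by (simp add: qs_def)
  qed
  obtain m where m: "m \<in> seqs n k r" using exists_seq[OF r kn] by blast
  have "rho r ^ k \<le> Pm (qs r 1) k r m"
    by (rule Pm_lower[OF ql]) (use rho_pos[OF r] m seqs_sub in auto)
  also have "\<dots> \<le> (\<Sum>m\<in>seqs n k r. Pm (qs r 1) k r m)"
    by (rule member_le_sum[OF m]) (auto intro!: Pm_nonneg qs_nonneg r simp: finite_subset[OF seqs_sub Dset_finite])
  also have "\<dots> = fact k / F r 1 ^ k * Q n k r" using sum_seqs[where n=n and k=k and r=r and s=1] by simp
  finally have "rho r ^ k * (F r 1 ^ k / fact k) \<le> Q n k r" using F0 by (simp add: field_simps)
  moreover have "bound n k r \<le> F r 1 ^ k / fact k" using bound_le[OF r, of 1] by simp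
  ultimately show ?thesis using rho_pos[OF r]
    by (meson mult_left_mono order_trans zero_le_power less_imp_le)
qed

lemma Q_nonneg: "Q n k r \<ge> 0"
  unfolding Q_def by (intro sum_nonneg prod_nonneg divide_nonneg_nonneg zero_le_power) (auto simp: trees_nonneg)

lemma rho_le1: assumes "r \<ge> 1" shows "rho r \<le> 1"
proof -
  have "F r 1 = trees 1 * 1 ^ 1 / fact 1 + (\<Sum>l\<in>{1..r}-{1}. trees l * 1 ^ l / fact l)"
    unfolding F_def by (rule sum_first[OF assms])
  moreover have "(\<Sum>l\<in>{1..r}-{1}. trees l * (1::real) ^ l / fact l) \<ge> 0" by (intro sum_nonneg) (auto simp: trees_nonneg)
  ultimately have F1: "F r 1 \<ge> 1" by (simp add: trees_def)
  have "fact r * F r 1 \<ge> 1 * 1" using F1 by (intro mult_mono) (auto simp: fact_ge_1)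
  thus ?thesis by (simp add: rho_def)
qed

lemma part2_r:
  assumes \<eta>: "0 < \<eta>" "\<eta> < 1" and r: "r \<ge> 2"
  shows "\<exists>c>0. \<forall>n k. k \<ge> 1 \<and> real k < (1 - \<eta>) * real n \<and> real r * real k > real n * (1 + \<eta>)
           \<longrightarrow> Q n k r \<ge> c / sqrt (real n) * bound n k r"
proof -
  have r1: "r \<ge> 1" using r by simp
  obtain slo shi where sl: "0 < slo" "slo \<le> shi" "Mn r slo < 1 + \<eta>" "Mn r shi > real r / (1 + \<eta>)"
    using saddle_range[OF r \<eta>] by blast
  define \<delta> where "\<delta> = min (slo / F r shi) (slo^2 / 2 / F r shi)"
  have \<delta>0: "\<delta> > 0" using q12(3)[OF r sl(1) sl(2) order.refl] by (simp add: \<delta>_def)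
  define N0 where "N0 = nat \<lceil>(4*(2*real r + 2)/\<delta>)^2\<rceil>"
  define c0 where "c0 = exp(-4*(2*real r)*(2*real r+2)/\<delta>) / (12 * (2*real r))"
  define c where "c = min c0 (rho r ^ N0)"
  have c0: "c0 > 0" using r by (simp add: c0_def)
  have c: "c > 0" using c0 rho_pos[OF r1] by (simp add: c_def)
  show ?thesis
  proof (intro exI[of _ c] conjI allI impI c)
    fix n k assume a: "k \<ge> 1 \<and> real k < (1 - \<eta>) * real n \<and> real r * real k > real n * (1 + \<eta>)"
    hence k1: "k \<ge> 1" and kn': "real k < (1 - \<eta>) * real n" and rk: "real r * real k > real n * (1 + \<eta>)" by auto
    have "(1 - \<eta>) * real n \<le> real n" using \<eta> by (simp add: algebra_simps)
    hence kn: "k \<le> n" using kn' by linarith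
    have "real n * (1 + \<eta>) \<ge> real n" using \<eta> by (simp add: algebra_simps)
    hence "real n < real (r * k)" using rk by simp
    hence nrk: "n \<le> r * k" by linarith
    have n1: "n \<ge> 1" using k1 kn by simp
    have sn: "sqrt (real n) \<ge> 1" using n1 by simp
    have b0: "bound n k r \<ge> 0" using part1[OF r1, of n k] Q_nonneg[of n k r] by linarith
    have cb: "c / sqrt (real n) * bound n k r \<le> c * bound n k r"
    proof -
      have "c / sqrt (real n) \<le> c" using c sn by (simp add: divide_le_eq)  
      thus ?thesis using b0 by (rule mult_right_mono)
    qed
    show "Q n k r \<ge> c / sqrt (real n) * bound n k r"
    proof (cases "k < N0")
      case True
      have "c \<le> rho r ^ N0" by (simp add: c_def)
      also have "\<dots> \<le> rho r ^ k" using True rho_pos[OF r1] rho_le1[OF r1]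
        by (intro power_decreasing) auto
      finally have "c * bound n k r \<le> rho r ^ k * bound n k r" using b0 by (rule mult_right_mono)
      also have "\<dots> \<le> Q n k r" by (rule small_case[OF r1 kn nrk])
      finally show ?thesis using cb by linarith
    next
      case False
      have "real k \<ge> (4*(2*real r + 2)/\<delta>)^2" using False unfolding N0_def by linarith
      hence "sqrt (real k) \<ge> sqrt ((4*(2*real r + 2)/\<delta>)^2)" by (rule real_sqrt_le_mono)
      hence "sqrt (real k) \<ge> 4*(2*real r + 2)/\<delta>" using \<delta>0 by simp
      hence large: "4*(2*real r + 2) \<le> \<delta> * sqrt (real k)" using \<delta>0 by (simp add: field_simps)
      obtain s where s: "slo \<le> s" "s \<le> shi" "real k * Mn r s = real n"
        using saddle[OF r sl \<eta> k1 kn' rk] by blast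
      have s0: "s > 0" using s sl by linarith
      interpret normq "qs r s" r by (rule qs_normq[OF r1 s0])
      have qnn: "\<And>l. qs r s l \<ge> 0" by (rule qs_nonneg[OF r1 s0])
      have q1: "qs r s 1 \<ge> \<delta>" "qs r s 2 \<ge> \<delta>" using q12[OF r sl(1) s(1) s(2)] by (simp_all add: \<delta>_def)
      have mean: "real k * (\<Sum>l=1..r. real l * qs r s l) = real n" using s(3) by (simp add: Mn_def)
      have LL: "(\<Sum>m\<in>seqs n k r. Pm (qs r s) k r m) \<ge> c0 / sqrt (real k)"
        using local_lower[OF r qnn \<delta>0 q1 k1 mean large] by (simp add: c0_def)
      have "c0 / sqrt (real n) \<le> c0 / sqrt (real k)" using c0 kn k1 by (intro divide_left_mono) auto
      with LL have LL': "fact k * s ^ n / F r s ^ k * Q n k r \<ge> c0 / sqrt (real n)" by (simp add: sum_seqs)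
      have Fp: "F r s ^ k > 0" "s ^ n > 0" using F_pos[OF r1 s0] s0 by auto
      define X where "X = fact k * s ^ n / F r s ^ k"
      have X0: "X > 0" using Fp by (simp add: X_def)
      have "c0 / sqrt (real n) \<le> X * Q n k r" using LL' unfolding X_def[symmetric] .
      hence "c0 / sqrt (real n) / X \<le> Q n k r" using X0 by (metis mult.commute pos_divide_le_eq)
      moreover have "c0 / sqrt (real n) / X = c0 / sqrt (real n) * (F r s ^ k / s ^ n / fact k)"
        using Fp by (simp add: X_def field_simps)
      ultimately have "c0 / sqrt (real n) * (F r s ^ k / s ^ n / fact k) \<le> Q n k r" by simp
      moreover have "bound n k r \<le> F r s ^ k / s ^ n / fact k" by (rule bound_le[OF r1 s0])
      ultimately have "c0 / sqrt (real n) * bound n k r \<le> Q n k r" using c0 sn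
        by (meson divide_nonneg_pos less_imp_le mult_left_mono order_trans less_le_trans zero_less_one)
      moreover have "c / sqrt (real n) * bound n k r \<le> c0 / sqrt (real n) * bound n k r"
        using b0 sn by (intro mult_right_mono divide_right_mono) (auto simp: c_def)
      ultimately show ?thesis by linarith
    qed
  qed
qed

theorem proposition4p1:
  shows "(\<forall>n k r. n \<ge> 1 \<and> k \<ge> 1 \<and> r \<ge> 1 \<longrightarrow> Q n k r \<le> bound n k r)
    \<and> (\<forall>\<eta>::real. \<eta> > 0 \<longrightarrow>
         (\<exists>n0::nat. \<exists>c::nat \<Rightarrow> real. (\<forall>r\<ge>1. c r > 0) \<and>
            (\<forall>n k r. n \<ge> n0 \<and> k \<ge> 1 \<and> r \<ge> 2 \<and>
                 real k < (1 - \<eta>) * real n \<and> real r * real k > real n * (1 + \<eta>)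
               \<longrightarrow> Q n k r \<ge> c r / sqrt (real n) * bound n k r)))"
proof (intro conjI allI impI)
  fix n k r :: nat assume "n \<ge> 1 \<and> k \<ge> 1 \<and> r \<ge> 1"
  thus "Q n k r \<le> bound n k r" by (intro part1) auto
next
  fix \<eta> :: real assume \<eta>: "\<eta> > 0"
  show "\<exists>n0::nat. \<exists>c::nat \<Rightarrow> real. (\<forall>r\<ge>1. c r > 0) \<and>
            (\<forall>n k r. n \<ge> n0 \<and> k \<ge> 1 \<and> r \<ge> 2 \<and>
                 real k < (1 - \<eta>) * real n \<and> real r * real k > real n * (1 + \<eta>)
               \<longrightarrow> Q n k r \<ge> c r / sqrt (real n) * bound n k r)"
  proof (cases "\<eta> < 1")
    case True
    have "\<forall>r. \<exists>c. r \<ge> 2 \<longrightarrow> c > 0 \<and> (\<forall>n k. k \<ge> 1 \<and> real k < (1 - \<eta>) * real n \<and> real r * real k > real n * (1 + \<eta>)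
           \<longrightarrow> Q n k r \<ge> c / sqrt (real n) * bound n k r)"
      using part2_r[OF \<eta> True] by blast
    then obtain C where C: "\<And>r. r \<ge> 2 \<Longrightarrow> C r > 0 \<and> (\<forall>n k. k \<ge> 1 \<and> real k < (1 - \<eta>) * real n \<and> real r * real k > real n * (1 + \<eta>)
           \<longrightarrow> Q n k r \<ge> C r / sqrt (real n) * bound n k r)"
      by metis
    show ?thesis
    proof (intro exI[of _ 0] exI[of _ "\<lambda>r. if r \<ge> 2 then C r else 1"] conjI allI impI)
      fix r :: nat assume "r \<ge> 1"
      thus "0 < (if r \<ge> 2 then C r else 1)" using C by auto
    next
      fix n k r :: nat
      assume a: "0 \<le> n \<and> 1 \<le> k \<and> 2 \<le> r \<and> real k < (1 - \<eta>) * real n \<and> real n * (1 + \<eta>) < real r * real k"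
      thus "(if r \<ge> 2 then C r else 1) / sqrt (real n) * bound n k r \<le> Q n k r" using C[of r] by auto
    qed
  next
    case False
    show ?thesis
    proof (intro exI[of _ 0] exI[of _ "\<lambda>r. 1"] conjI allI impI)
      fix n k r :: nat
      assume a: "0 \<le> n \<and> 1 \<le> k \<and> 2 \<le> r \<and> real k < (1 - \<eta>) * real n \<and> real n * (1 + \<eta>) < real r * real k"
      have "(1 - \<eta>) * real n \<le> 0" using False by (intro mult_nonpos_nonneg) auto
      thus "1 / sqrt (real n) * bound n k r \<le> Q n k r" using a by linarith
    qed simp
  qed
qed

end
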